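(* Let $k_1,k_2$ be positive integers with $k_1<k_2\le2k_1$, and set $\delta=k_2-k_1$. Let $\digamma_{k_1}^{k_2}$ be the $(\delta+1)\times(\delta+1)$ matrix whose $(i,j)$ entry is $\frac{1}{(k_1-i+j)!}$ for $1\le i,j\le\delta+1$. Then $$\det(\digamma_{k_1}^{k_2})=\frac{\delta!\,(\delta-1)!\cdots1!}{k_2!\,(k_2-1)!\cdots k_1!};$$ in particular $\digamma_{k_1}^{k_2}$ is invertible. *)

theory Defs
  imports "Jordan_Normal_Form.Determinant"
begin

(* Jordan_Normal_Form matrices are 0-indexed, so the 0-based entry
   (i,j) is the paper's entry (i+1,j+1), i.e. 1/(k1-(i+1)+(j+1))! = 1/(k1-i+j)!.
   Under k2 <= 2 k1 we have i <= delta <= k1, so the natural subtraction never truncates. *)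
definition digamma_mat :: "nat \<Rightarrow> nat \<Rightarrow> real mat" where
  "digamma_mat k1 k2 = mat (k2 - k1 + 1) (k2 - k1 + 1) (\<lambda>(i, j). 1 / fact (k1 - i + j))"

end

theory Submission imports Defs begin

definition FF :: "(nat \<Rightarrow> nat) \<Rightarrow> nat \<Rightarrow> real mat" where
  "FF c n = mat n n (\<lambda>(i,j). 1 / fact (c i + j))"

definition EE :: "nat \<Rightarrow> nat \<Rightarrow> real mat" where
  "EE K n = mat n n (\<lambda>(r,j). (if r = j then 1 else 0) + (if r = Suc j then - real (Suc j + K) else 0))"

lemma det_EE: "det (EE K n) = 1"
proof -
  have "det (EE K n) = prod_list (diag_mat (EE K n))"
    by (rule det_lower_triangular[of n], auto simp: EE_def)
  also have "\<dots> = 1" by (simp add: prod_list_diag_prod EE_def)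
  finally show ?thesis .
qed

lemma aux_field: fixes f d c j K :: real
  assumes "f > 0" "c \<ge> 0" "j \<ge> 0" "d = c + j + 1"
  shows "1 / f + 1 / (d * f) * (- (j + 1 + K)) = (c - K) / (d * f)"
proof -
  have d: "d > 0" using assms by simp
  have "1 / f + 1 / (d * f) * (- (j + 1 + K)) = (d - (j + 1 + K)) / (d * f)"
    using d \<open>f > 0\<close> by (simp add: field_simps)
  also have "d - (j + 1 + K) = c - K" using assms(4) by simp
  finally show ?thesis .
qed

lemma FE_entry:
  assumes i: "i < n" and j: "j < n"
  shows "(FF c n * EE K n) $$ (i,j) =
    (if Suc j < n then (real (c i) - real K) / fact (c i + Suc j) else 1 / fact (c i + j))"
proof -
  have "(FF c n * EE K n) $$ (i,j) = (\<Sum>r\<in>{0..<n}. (1 / fact (c i + r)) *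
     ((if r = j then 1 else 0) + (if r = Suc j then - real (Suc j + K) else 0)))"
    using i j by (simp add: FF_def EE_def scalar_prod_def)
  also have "\<dots> = 1 / fact (c i + j) + (if Suc j < n then (1 / fact (c i + Suc j)) * (- real (Suc j + K)) else 0)"
  proof -
    have "(\<Sum>r\<in>{0..<n}. (1 / fact (c i + r)) *
     ((if r = j then 1 else 0) + (if r = Suc j then - real (Suc j + K) else 0))) =
      (\<Sum>r\<in>{0..<n}. (if r = j then 1 / fact (c i + r) else 0)) +
      (\<Sum>r\<in>{0..<n}. (if r = Suc j then (1 / fact (c i + r)) * (- real (Suc j + K)) else 0))"
      unfolding sum.distrib[symmetric] by (rule sum.cong) auto
    also have "\<dots> = 1 / fact (c i + j) + (if Suc j < n then (1 / fact (c i + Suc j)) * (- real (Suc j + K)) else 0)"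
      using j by (simp add: sum.delta)
    finally show ?thesis .
  qed
  also have "\<dots> = (if Suc j < n then (real (c i) - real K) / fact (c i + Suc j) else 1 / fact (c i + j))"
  proof (cases "Suc j < n")
    case True
    have "(fact (c i + Suc j) :: real) = real (c i + Suc j) * fact (c i + j)"
      by (simp only: add_Suc_right fact_Suc)
    then show ?thesis using True
      using aux_field[of "fact (c i + j)" "real (c i)" "real j" "real (c i + Suc j)" "real K"]
      by (simp add: algebra_simps)
  qed simp
  finally show ?thesis .
qed

lemma FF_carrier[simp]: "FF c n \<in> carrier_mat n n" by (simp add: FF_def)
lemma EE_carrier[simp]: "EE K n \<in> carrier_mat n n" by (simp add: EE_def)

lemma FF_dim[simp]: "dim_row (FF c n) = n" "dim_col (FF c n) = n" by (simp_all add: FF_def)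
lemma EE_dim[simp]: "dim_row (EE K n) = n" "dim_col (EE K n) = n" by (simp_all add: EE_def)

lemma det_FF: "det (FF c n) = (\<Prod>i'<n. \<Prod>i<i'. (real (c i) - real (c i'))) / (\<Prod>i<n. fact (c i + n - 1))"
proof (induction n arbitrary: c)
  case 0
  then show ?case by (simp add: FF_def)
next
  case (Suc m)
  define n where "n = Suc m"
  define K where "K = c m"
  define G where "G = FF c n * EE K n"
  have G: "G \<in> carrier_mat n n" unfolding G_def by (rule mult_carrier_mat[of _ n n]) simp_all
  have dG: "det (FF c n) = det G"
    unfolding G_def by (simp add: det_mult[of _ n] det_EE)
  have m: "m < n" unfolding n_def by simp
  have Gent: "\<And>i j. i < n \<Longrightarrow> j < n \<Longrightarrow> G $$ (i,j) =
    (if Suc j < n then (real (c i) - real K) / fact (c i + Suc j) else 1 / fact (c i + j))"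
    unfolding G_def by (rule FE_entry)
  have Gd: "dim_row G = n" "dim_col G = n" using G by auto
  have "det G = (\<Sum>j<n. G $$ (m,j) * cofactor G m j)"
    by (rule laplace_expansion_row[OF G m])
  also have "\<dots> = (\<Sum>j\<in>{m}. G $$ (m,j) * cofactor G m j)"
  proof (rule sum.mono_neutral_right)
    show "\<forall>j\<in>{..<n} - {m}. G $$ (m, j) * cofactor G m j = 0"
    proof
      fix j assume j: "j \<in> {..<n} - {m}"
      then have "Suc j < n" unfolding n_def by auto
      moreover have "j < n" using j by auto
      ultimately have "G $$ (m, j) = 0"
        unfolding G_def by (simp add: FE_entry[OF m] K_def)
      then show "G $$ (m, j) * cofactor G m j = 0" by simp
    qed
  qed (use m in auto)
  also have "\<dots> = G $$ (m,m) * cofactor G m m" by simp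
  also have "G $$ (m,m) = 1 / fact (K + m)"
    unfolding G_def by (subst FE_entry[OF m m]) (simp add: K_def n_def)
  also have "cofactor G m m = det (mat_delete G m m)"
    unfolding cofactor_def by (simp add: power_add[symmetric] mult_2[symmetric])
  also have "mat_delete G m m = mat\<^sub>r m m (\<lambda>i. (real (c i) - real K) \<cdot>\<^sub>v vec m (\<lambda>j. 1 / fact (Suc (c i) + j)))"
    by (rule eq_matI) (auto simp: mat_delete_def Gd Gent n_def)
  also have "det \<dots> = prod (\<lambda>i. real (c i) - real K) {0..<m} * det (mat\<^sub>r m m (\<lambda>i. vec m (\<lambda>j. 1 / fact (Suc (c i) + j))))"
    by (rule det_rows_mul) auto
  also have "mat\<^sub>r m m (\<lambda>i. vec m (\<lambda>j. 1 / fact (Suc (c i) + j))) = FF (\<lambda>i. Suc (c i)) m"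
    by (rule eq_matI) (auto simp: FF_def)
  also have "det (FF (\<lambda>i. Suc (c i)) m) = (\<Prod>i'<m. \<Prod>i<i'. (real (c i) - real (c i'))) / (\<Prod>i<m. fact (c i + m))"
    using Suc.IH[of "\<lambda>i. Suc (c i)"] by simp
  finally have "det G = 1 / fact (K + m) * (prod (\<lambda>i. real (c i) - real K) {0..<m} *
     ((\<Prod>i'<m. \<Prod>i<i'. (real (c i) - real (c i'))) / (\<Prod>i<m. fact (c i + m))))" .
  then show ?case
    by (simp add: dG[unfolded n_def] K_def atLeast0LessThan field_simps)
qed

lemma prod_diff_fact: "(\<Prod>i<k. real (k - i)) = fact k"
proof -
  have "(\<Prod>i<k. real (k - i)) = (\<Prod>x\<in>{1..k}. real x)"
    by (rule prod.reindex_bij_witness[of _ "\<lambda>x. k - x" "\<lambda>i. k - i"]) auto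
  also have "\<dots> = fact k" by (simp add: fact_prod)
  finally show ?thesis .
qed

lemma invertible_of_det:
  fixes A :: "real mat"
  assumes A: "A \<in> carrier_mat n n" and d: "det A \<noteq> 0"
  shows "invertible_mat A"
proof -
  have "A \<in> Units (ring_mat TYPE(real) n undefined)"
    by (rule det_non_zero_imp_unit[OF A d])
  then obtain B where B: "B \<in> carrier_mat n n" "B * A = 1\<^sub>m n" "A * B = 1\<^sub>m n"
    unfolding Units_def ring_mat_def by auto
  then show ?thesis using A unfolding invertible_mat_def inverts_mat_def square_mat.simps
    by auto
qed

theorem theoremA2:
  fixes k1 k2 :: nat
  assumes "0 < k1" and "k1 < k2" and "k2 \<le> 2 * k1"
  shows "det (digamma_mat k1 k2) =
           (\<Prod>i = 1..k2 - k1. fact i) / (\<Prod>i = k1..k2. fact i)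
         \<and> invertible_mat (digamma_mat k1 k2)"
proof -
  define d where "d = k2 - k1"
  have dk: "d \<le> k1" using assms unfolding d_def by auto
  have eq: "digamma_mat k1 k2 = FF (\<lambda>i. k1 - i) (Suc d)"
    by (simp add: digamma_mat_def FF_def d_def)
  have num: "(\<Prod>i'<Suc d. \<Prod>i<i'. (real (k1 - i) - real (k1 - i'))) = (\<Prod>i = 1..d. fact i)"
  proof -
    have "(\<Prod>i'<Suc d. \<Prod>i<i'. (real (k1 - i) - real (k1 - i'))) = (\<Prod>i'<Suc d. (fact i' :: real))"
    proof (rule prod.cong[OF refl])
      fix i' assume "i' \<in> {..<Suc d}"
      then have "i' \<le> k1" using dk by auto
      then have "(\<Prod>i<i'. (real (k1 - i) - real (k1 - i'))) = (\<Prod>i<i'. real (i' - i))"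
        by (intro prod.cong) (auto simp: of_nat_diff)
      then show "(\<Prod>i<i'. (real (k1 - i) - real (k1 - i'))) = fact i'"
        by (simp only: prod_diff_fact)
    qed
    also have "\<dots> = (\<Prod>i\<in>{0..d}. (fact i :: real))"
      by (rule prod.cong) auto
    also have "\<dots> = (\<Prod>i = 1..d. fact i)"
      by (simp add: prod.atLeast0_atMost_Suc_shift atLeastSucAtMost_greaterThanAtMost[symmetric]
          prod.atLeast_Suc_atMost)
    finally show ?thesis .
  qed
  have den: "(\<Prod>i<Suc d. (fact (k1 - i + Suc d - 1) :: real)) = (\<Prod>i = k1..k2. fact i)"
    by (rule prod.reindex_bij_witness[of _ "\<lambda>k. k2 - k" "\<lambda>i. k2 - i"])
       (use dk assms in \<open>auto simp: d_def\<close>)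
  have D: "det (digamma_mat k1 k2) = (\<Prod>i = 1..k2 - k1. fact i) / (\<Prod>i = k1..k2. fact i)"
  proof -
    have "det (digamma_mat k1 k2) = (\<Prod>i = 1..d. fact i) / (\<Prod>i = k1..k2. fact i)"
      unfolding eq det_FF num den ..
    then show ?thesis by (simp add: d_def)
  qed
  have "det (digamma_mat k1 k2) \<noteq> 0" unfolding D
    by (simp add: prod_zero_iff)
  moreover have "digamma_mat k1 k2 \<in> carrier_mat (Suc d) (Suc d)" unfolding eq by simp
  ultimately show ?thesis using D invertible_of_det by blast
qed

end
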